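(* Let $\mathcal{P}$ be a profile of unrooted phylogenetic trees whose display graph $G(\mathcal{P})$ is connected (so $\mathrm{LG}(\mathcal{P})$ is connected). If $F$ is a minimal separator of $\mathrm{LG}(\mathcal{P})$, then $\mathrm{LG}(\mathcal{P})-F$ has exactly two connected components.
   Context: A phylogenetic tree is an unrooted tree whose leaves are bijectively labeled (leaves identified with labels; internal vertices have degree at least three). A profile $\mathcal{P}=\{T_1,\dots,T_k\}$ is a finite collection of phylogenetic trees; internal vertices of distinct trees are disjoint, while leaves with the same label are the same vertex. The display graph $G(\mathcal{P})$ has vertex set $\bigcup_i V(T_i)$ and edge set $\bigcup_i E(T_i)$. $\mathrm{LG}(\mathcal{P})$ is the line graph of $G(\mathcal{P})$ (vertices are edges of $G(\mathcal{P})$, adjacent iff they share an endpoint). In a graph $G$, for nonadjacent vertices $a,b$, an $a$-$b$ separator is $U\subset V(G)$ with $a,b$ in different components of $G-U$; it is minimal if no proper subset is an $a$-$b$ separator; a minimal separator is a minimal $a$-$b$ separator for some nonadjacent $a,b$. *)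

theory Defs
  imports Main
begin

definition simple_graph :: "'v set \<Rightarrow> 'v set set \<Rightarrow> bool" where
  "simple_graph V E \<longleftrightarrow> (\<forall>e\<in>E. e \<subseteq> V \<and> card e = 2)"

definition reach :: "'v set \<Rightarrow> 'v set set \<Rightarrow> 'v \<Rightarrow> 'v \<Rightarrow> bool" where
  "reach V E x y \<longleftrightarrow> x \<in> V \<and>
     (x, y) \<in> {(u, w). u \<in> V \<and> w \<in> V \<and> {u, w} \<in> E}\<^sup>*"

definition connected_graph :: "'v set \<Rightarrow> 'v set set \<Rightarrow> bool" where
  "connected_graph V E \<longleftrightarrow> (\<forall>x\<in>V. \<forall>y\<in>V. reach V E x y)"

definition components :: "'v set \<Rightarrow> 'v set set \<Rightarrow> 'v set set" where
  "components V E = {{y. reach V E x y} | x. x \<in> V}"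

definition del_verts_E :: "'v set set \<Rightarrow> 'v set \<Rightarrow> 'v set set" where
  "del_verts_E E U = {e \<in> E. e \<inter> U = {}}"

definition is_cycle :: "'v set \<Rightarrow> 'v set set \<Rightarrow> 'v list \<Rightarrow> bool" where
  "is_cycle V E cs \<longleftrightarrow> length cs \<ge> 3 \<and> distinct cs \<and> set cs \<subseteq> V \<and>
     (\<forall>i < length cs - 1. {cs ! i, cs ! Suc i} \<in> E) \<and> {last cs, hd cs} \<in> E"

definition is_tree :: "'v set \<Rightarrow> 'v set set \<Rightarrow> bool" where
  "is_tree V E \<longleftrightarrow> finite V \<and> V \<noteq> {} \<and> simple_graph V E \<and> connected_graph V E \<and>
     \<not> (\<exists>cs. is_cycle V E cs)"

definition degree :: "'v set set \<Rightarrow> 'v \<Rightarrow> nat" where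
  "degree E v = card {e \<in> E. v \<in> e}"

text \<open>Leaves are the vertices of degree at most one; leaves are identified with
  their labels, so the labelling is the identity.\<close>
definition leaves :: "'v set \<Rightarrow> 'v set set \<Rightarrow> 'v set" where
  "leaves V E = {v \<in> V. degree E v \<le> 1}"

definition phylo_tree :: "'v set \<Rightarrow> 'v set set \<Rightarrow> bool" where
  "phylo_tree V E \<longleftrightarrow> is_tree V E \<and> (\<forall>v \<in> V - leaves V E. degree E v \<ge> 3)"

definition profile :: "('v set \<times> 'v set set) set \<Rightarrow> bool" where
  "profile P \<longleftrightarrow> finite P \<and> (\<forall>(V, E) \<in> P. phylo_tree V E) \<and>
     (\<forall>T \<in> P. \<forall>T' \<in> P. T \<noteq> T' \<longrightarrow>
        fst T \<inter> fst T' \<subseteq> leaves (fst T) (snd T) \<inter> leaves (fst T') (snd T'))"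

definition display_V :: "('v set \<times> 'v set set) set \<Rightarrow> 'v set" where
  "display_V P = (\<Union>T \<in> P. fst T)"

definition display_E :: "('v set \<times> 'v set set) set \<Rightarrow> 'v set set" where
  "display_E P = (\<Union>T \<in> P. snd T)"

definition line_E :: "'v set set \<Rightarrow> 'v set set set" where
  "line_E E = {{e, f} | e f. e \<in> E \<and> f \<in> E \<and> e \<noteq> f \<and> e \<inter> f \<noteq> {}}"

definition separator :: "'w set \<Rightarrow> 'w set set \<Rightarrow> 'w \<Rightarrow> 'w \<Rightarrow> 'w set \<Rightarrow> bool" where
  "separator V E a b U \<longleftrightarrow> U \<subseteq> V \<and> a \<in> V - U \<and> b \<in> V - U \<and>
     \<not> reach (V - U) (del_verts_E E U) a b"

definition minimal_ab_separator :: "'w set \<Rightarrow> 'w set set \<Rightarrow> 'w \<Rightarrow> 'w \<Rightarrow> 'w set \<Rightarrow> bool" where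
  "minimal_ab_separator V E a b U \<longleftrightarrow> separator V E a b U \<and>
     (\<forall>U'. U' \<subset> U \<longrightarrow> \<not> separator V E a b U')"

definition minimal_separator :: "'w set \<Rightarrow> 'w set set \<Rightarrow> 'w set \<Rightarrow> bool" where
  "minimal_separator V E U \<longleftrightarrow> (\<exists>a b. a \<in> V \<and> b \<in> V \<and> a \<noteq> b \<and> {a, b} \<notin> E \<and>
     minimal_ab_separator V E a b U)"

end

theory Submission
  imports Defs
begin

definition adjR :: "'a set set \<Rightarrow> ('a set \<times> 'a set) set" where
  "adjR W = {(u,w). u \<in> W \<and> w \<in> W \<and> u \<noteq> w \<and> u \<inter> w \<noteq> {}}"

lemma reach_line:
  "reach (E - F) (del_verts_E (line_E E) F) x y \<longleftrightarrow> x \<in> E - F \<and> (x,y) \<in> (adjR (E - F))\<^sup>*"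
proof -
  have "{(u, w). u \<in> E - F \<and> w \<in> E - F \<and> {u, w} \<in> del_verts_E (line_E E) F} = adjR (E - F)"
    unfolding adjR_def del_verts_E_def line_E_def by (auto simp: doubleton_eq_iff)
  thus ?thesis unfolding reach_def by simp
qed

lemma sym_adjR: "sym (adjR W)"
  unfolding adjR_def sym_def by auto

lemma adjR_closed: "(x,y) \<in> (adjR W)\<^sup>* \<Longrightarrow> x \<in> W \<Longrightarrow> y \<in> W"
  by (induction rule: rtrancl_induct) (auto simp: adjR_def)

lemma adjR_step: "e \<in> W \<Longrightarrow> g \<in> W \<Longrightarrow> e \<inter> g \<noteq> {} \<Longrightarrow> (e,g) \<in> (adjR W)\<^sup>*"
  by (cases "e = g") (auto simp: adjR_def)

lemma touch_lemma:
  assumes "(x,y) \<in> (adjR (insert f W))\<^sup>*" "x \<in> W" "f \<notin> W"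
  shows "(x,y) \<in> (adjR W)\<^sup>* \<or> (\<exists>c. (x,c) \<in> (adjR W)\<^sup>* \<and> c \<inter> f \<noteq> {})"
  using assms(1)
proof (induction rule: rtrancl_induct)
  case base then show ?case by simp
next
  case (step y z)
  from step.IH show ?case
  proof
    assume xy: "(x,y) \<in> (adjR W)\<^sup>*"
    have yW: "y \<in> W" using adjR_closed[OF xy assms(2)] .
    show ?thesis
    proof (cases "z = f")
      case True
      then show ?thesis using xy step.hyps(2) by (auto simp: adjR_def)
    next
      case False
      then have "(y,z) \<in> adjR W" using step.hyps(2) yW by (auto simp: adjR_def)
      then show ?thesis using xy by (meson rtrancl.rtrancl_into_rtrancl)
    qed
  next
    assume "\<exists>c. (x,c) \<in> (adjR W)\<^sup>* \<and> c \<inter> f \<noteq> {}"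
    then show ?thesis by blast
  qed
qed

theorem lemma4:
  fixes P :: "('v set \<times> 'v set set) set" and F :: "'v set set"
  assumes "profile P"
    and "connected_graph (display_V P) (display_E P)"
    and "minimal_separator (display_E P) (line_E (display_E P)) F"
  shows "card (components (display_E P - F) (del_verts_E (line_E (display_E P)) F)) = 2"
proof -
  define E where "E = display_E P"
  define V where "V = display_V P"
  have edge: "\<And>e. e \<in> E \<Longrightarrow> e \<subseteq> V \<and> card e = 2"
  proof -
    fix e assume "e \<in> E"
    then obtain T where T: "T \<in> P" "e \<in> snd T" unfolding E_def display_E_def by blast
    then have "phylo_tree (fst T) (snd T)" using assms(1) unfolding profile_def by auto
    then have "simple_graph (fst T) (snd T)" unfolding phylo_tree_def is_tree_def by blast
    then have "e \<subseteq> fst T \<and> card e = 2" using T(2) unfolding simple_graph_def by blast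
    moreover have "fst T \<subseteq> V" using T(1) unfolding V_def display_V_def by blast
    ultimately show "e \<subseteq> V \<and> card e = 2" by blast
  qed
  from assms(3) obtain a b where ab: "a \<in> E" "b \<in> E" "minimal_ab_separator E (line_E E) a b F"
    unfolding minimal_separator_def E_def by blast
  define W where "W = E - F"
  define R where "R = adjR W"
  have sep: "F \<subseteq> E" "a \<in> W" "b \<in> W" "(a,b) \<notin> R\<^sup>*"
    using ab(3) unfolding minimal_ab_separator_def separator_def reach_line W_def R_def by auto
  have minf: "(a,b) \<in> (adjR (insert f W))\<^sup>*" if f: "f \<in> F" for f
  proof -
    have "F - {f} \<subset> F" using f by auto
    moreover have "\<forall>U'. U' \<subset> F \<longrightarrow> \<not> separator E (line_E E) a b U'"
      using ab(3) unfolding minimal_ab_separator_def by (rule conjunct2)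
    ultimately have "\<not> separator E (line_E E) a b (F - {f})" by blast
    moreover have "E - (F - {f}) = insert f W" using f sep(1) W_def by auto
    ultimately show ?thesis using sep unfolding separator_def reach_line W_def by auto
  qed
  have symR: "sym (R\<^sup>*)" by (simp add: R_def sym_adjR sym_rtrancl)
  have RW: "\<And>x. (a,x) \<in> R\<^sup>* \<or> (b,x) \<in> R\<^sup>* \<Longrightarrow> x \<in> W"
    using adjR_closed sep(2,3) R_def by metis
  have touch: "\<exists>c d. (a,c)\<in>R\<^sup>* \<and> (b,d)\<in>R\<^sup>* \<and> c\<inter>f\<noteq>{} \<and> d\<inter>f\<noteq>{}" if f: "f \<in> F" for f
  proof -
    have fW: "f \<notin> W" using f W_def by auto
    have sI: "sym ((adjR (insert f W))\<^sup>*)" by (simp add: sym_adjR sym_rtrancl)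
    have ba: "(b,a) \<in> (adjR (insert f W))\<^sup>*" using minf[OF f] sI by (meson symD)
    have nba: "(b,a) \<notin> R\<^sup>*" using sep(4) symR by (meson symD)
    obtain c where "(a,c)\<in>R\<^sup>*" "c\<inter>f\<noteq>{}" using touch_lemma[OF minf[OF f] sep(2) fW] sep(4) R_def by blast
    moreover obtain d where "(b,d)\<in>R\<^sup>*" "d\<inter>f\<noteq>{}" using touch_lemma[OF ba sep(3) fW] nba R_def by blast
    ultimately show ?thesis by blast
  qed
  have disj: "c \<inter> d = {}" if "(a,c)\<in>R\<^sup>*" "(b,d)\<in>R\<^sup>*" for c d
  proof (rule ccontr)
    assume "c \<inter> d \<noteq> {}"
    then have "(c,d) \<in> R\<^sup>*" using adjR_step RW that R_def by metis
    moreover have "(d,b) \<in> R\<^sup>*" using that(2) symR by (meson symD)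
    ultimately have "(a,b) \<in> R\<^sup>*" using that(1) by (meson rtrancl_trans)
    then show False using sep(4) by blast
  qed
  define good where "good z \<longleftrightarrow> (\<exists>e\<in>W. z\<in>e \<and> ((a,e)\<in>R\<^sup>* \<or> (b,e)\<in>R\<^sup>*))" for z
  have "a \<noteq> {}" using edge[OF ab(1)] by auto
  then obtain q where q: "q \<in> a" by blast
  define Gr where "Gr = {(u, w). u \<in> V \<and> w \<in> V \<and> {u, w} \<in> E}"
  have allgood: "good z" if "(q,z) \<in> Gr\<^sup>*" for z
    using that
  proof (induction rule: rtrancl_induct)
    case base
    then show ?case using q sep(2) unfolding good_def by blast
  next
    case (step y z)
    have yzE: "{y,z} \<in> E" using step.hyps(2) Gr_def by auto
    show ?case
    proof (cases "{y,z} \<in> F")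
      case True
      obtain c d where cd: "(a,c)\<in>R\<^sup>*" "(b,d)\<in>R\<^sup>*" "c\<inter>{y,z}\<noteq>{}" "d\<inter>{y,z}\<noteq>{}"
        using touch[OF True] by blast
      have "c \<inter> d = {}" using disj cd by blast
      then have "z \<in> c \<or> z \<in> d" using cd(3,4) by blast
      then show ?thesis unfolding good_def using cd(1,2) RW by blast
    next
      case False
      then have gW: "{y,z} \<in> W" using yzE W_def by auto
      from step.IH obtain e where e: "e \<in> W" "y \<in> e" "(a,e)\<in>R\<^sup>* \<or> (b,e)\<in>R\<^sup>*"
        unfolding good_def by blast
      have "(e,{y,z}) \<in> R\<^sup>*" using adjR_step[OF e(1) gW] e(2) R_def by blast
      then have "(a,{y,z})\<in>R\<^sup>* \<or> (b,{y,z})\<in>R\<^sup>*" using e(3) by (meson rtrancl_trans)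
      then show ?thesis unfolding good_def using gW by blast
    qed
  qed
  have cover: "(a,x)\<in>R\<^sup>* \<or> (b,x)\<in>R\<^sup>*" if x: "x \<in> W" for x
  proof -
    have xE: "x \<in> E" using x W_def by auto
    then have "x \<noteq> {}" using edge by fastforce
    then obtain p where p: "p \<in> x" by blast
    have "p \<in> V" "q \<in> V" using edge xE p ab(1) q by auto
    then have "reach V E q p" using assms(2) unfolding connected_graph_def V_def E_def by blast
    then have "(q,p) \<in> Gr\<^sup>*" unfolding reach_def Gr_def by blast
    then have "good p" by (rule allgood)
    then obtain e where e: "e \<in> W" "p \<in> e" "(a,e)\<in>R\<^sup>* \<or> (b,e)\<in>R\<^sup>*"
      unfolding good_def by blast
    have "(e,x) \<in> R\<^sup>*" using adjR_step[OF e(1) x] e(2) p R_def by blast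
    then show ?thesis using e(3) by (meson rtrancl_trans)
  qed
  have cls: "{y. (x,y)\<in>R\<^sup>*} = {y. (z,y)\<in>R\<^sup>*}" if "(z,x) \<in> R\<^sup>*" for x z
  proof -
    have "(x,z) \<in> R\<^sup>*" using that symR by (meson symD)
    then show ?thesis using that by (meson rtrancl_trans)
  qed
  have comps: "components W (del_verts_E (line_E E) F) = {{y. (a,y)\<in>R\<^sup>*}, {y. (b,y)\<in>R\<^sup>*}}"
  proof -
    have "components W (del_verts_E (line_E E) F) = {{y. (x,y)\<in>R\<^sup>*} | x. x \<in> W}"
      unfolding components_def W_def reach_line R_def by auto
    also have "\<dots> = {{y. (a,y)\<in>R\<^sup>*}, {y. (b,y)\<in>R\<^sup>*}}"
    proof (rule set_eqI, rule iffI)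
      fix C assume "C \<in> {{y. (x,y)\<in>R\<^sup>*} | x. x \<in> W}"
      then obtain x where x: "x \<in> W" "C = {y. (x,y)\<in>R\<^sup>*}" by blast
      then show "C \<in> {{y. (a,y)\<in>R\<^sup>*}, {y. (b,y)\<in>R\<^sup>*}}" using cover[OF x(1)] cls by auto
    next
      fix C assume "C \<in> {{y. (a,y)\<in>R\<^sup>*}, {y. (b,y)\<in>R\<^sup>*}}"
      then show "C \<in> {{y. (x,y)\<in>R\<^sup>*} | x. x \<in> W}" using sep(2,3) by blast
    qed
    finally show ?thesis .
  qed
  have "{y. (a,y)\<in>R\<^sup>*} \<noteq> {y. (b,y)\<in>R\<^sup>*}" using sep(4) by blast
  then have "card (components W (del_verts_E (line_E E) F)) = 2" using comps by simp
  then show ?thesis unfolding W_def E_def .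
qed

end
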